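(* Let $B$ be the simplicial $2$-sphere obtained from the bipyramid (the triangulation of $S^2$ with $5$ vertices and $6$ triangles) by a stellar subdivision of each of its $6$ triangles (adding a new vertex inside each triangle and joining it to the three vertices of that triangle), so that $f(B)=18$. Then $B$ has no winning strategy for the coloring game: in any play at most $4$ edges become red, hence at most $4<18/4$ triangles become green.
   Context: Coloring game on a simplicial $2$-sphere $B$: (1) choose one or two vertices of $B$ and color them red; (2) choose an edge of $B$ both of whose endpoints are currently uncolored and which, together with some already red vertex, spans a triangle of $B$; color the edge and its two endpoints red and color that triangle green. Step (2) may be repeated as long as possible. $B$ has a winning strategy if some admissible sequence of moves produces at least $f(B)/4$ green triangles, where $f(B)$ is the number of triangles of $B$. *)

theory Defs
  imports Main
begin

text \<open>A simplicial 2-sphere is represented by its set of triangles (3-element vertex sets).\<close>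

definition vertices :: "'a set set \<Rightarrow> 'a set" where
  "vertices B = \<Union>B"

definition edges :: "'a set set \<Rightarrow> 'a set set" where
  "edges B = {e. card e = 2 \<and> (\<exists>t\<in>B. e \<subseteq> t)}"

text \<open>Game states: (red vertices, red edges, green triangles).\<close>
inductive game_reach :: "'a set set \<Rightarrow> 'a set \<Rightarrow> 'a set set \<Rightarrow> 'a set set \<Rightarrow> bool"
  for B where
  start: "\<lbrakk>S \<subseteq> vertices B; card S = 1 \<or> card S = 2\<rbrakk> \<Longrightarrow> game_reach B S {} {}"
| move: "\<lbrakk>game_reach B R E G; {u, v} \<in> edges B; u \<notin> R; v \<notin> R; w \<in> R; {u, v, w} \<in> B\<rbrakk>
         \<Longrightarrow> game_reach B (R \<union> {u, v}) (insert {u, v} E) (insert {u, v, w} G)"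

definition winning :: "'a set set \<Rightarrow> bool" where
  "winning B \<longleftrightarrow> (\<exists>R E G. game_reach B R E G \<and> 4 * card G \<ge> card B)"

definition stellar_tri :: "'a set \<Rightarrow> 'a \<Rightarrow> 'a set set" where
  "stellar_tri t v = {{a, b, v} | a b. a \<in> t \<and> b \<in> t \<and> a \<noteq> b}"

text \<open>Bipyramid: equator 1,2,3, apexes 4,5.\<close>
definition bipyramid_tris :: "nat set list" where
  "bipyramid_tris = [{4,1,2},{4,2,3},{4,3,1},{5,1,2},{5,2,3},{5,3,1}]"

definition bipyramid :: "nat set set" where
  "bipyramid = set bipyramid_tris"

definition B_stellar :: "nat set set" where
  "B_stellar = (\<Union>i<6. stellar_tri (bipyramid_tris ! i) (6 + i))"

end

theory Submission
  imports Defs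
begin

lemma stel3: "x \<noteq> y \<Longrightarrow> x \<noteq> z \<Longrightarrow> y \<noteq> z \<Longrightarrow> stellar_tri {x,y,z} v = {{x,y,v},{x,z,v},{y,z,v}}"
  unfolding stellar_tri_def
  apply (rule set_eqI, rule iffI)
   apply (auto simp: insert_commute)[1]
  apply (elim insertE)
     apply (rule CollectI, rule exI[of _ x], rule exI[of _ y], simp)
    apply (rule CollectI, rule exI[of _ x], rule exI[of _ z], simp)
   apply (rule CollectI, rule exI[of _ y], rule exI[of _ z], simp)
  apply simp
  done

lemma lt6: "{..<6::nat} = {0,1,2,3,4,5}" by auto

lemma B_expl: "B_stellar = {{4,1,6},{4,2,6},{1,2,6},{4,2,7},{4,3,7},{2,3,7},
  {4,3,8},{4,1,8},{3,1,8},{5,1,9},{5,2,9},{1,2,9},{5,2,10},{5,3,10},{2,3,10},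
  {5,3,11},{5,1,11},{3,1,11}}"
  unfolding B_stellar_def lt6 bipyramid_tris_def by (simp add: stel3 insert_commute)

lemma tri_shape: "t \<in> B_stellar \<Longrightarrow> \<exists>a b c. t = {a,b,c} \<and> 1 \<le> a \<and> 1 \<le> b \<and> a \<le> 5 \<and> b \<le> 5 \<and> 6 \<le> c \<and> a \<noteq> b"
  unfolding B_expl
  by (elim insertE emptyE; hypsubst; (rule exI)+, rule conjI, rule refl, simp)

lemma card18: "card B_stellar = 18"
proof -
  let ?g = "\<lambda>t::nat set. \<Sum>x\<in>t. (2::nat)^x"
  have "?g ` B_stellar = {82, 84, 70, 148, 152, 140, 280, 274, 266, 546, 548, 518, 1060, 1064, 1036, 2088, 2082, 2058}"
    unfolding B_expl by simp
  then have "card (?g ` B_stellar) = 18" by simp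
  moreover have "card (?g ` B_stellar) \<le> card B_stellar"
    by (rule card_image_le) (simp add: B_expl)
  moreover have "card B_stellar \<le> 18"
  proof -
    have eq: "B_stellar = set [{4,1,6},{4,2,6},{1,2,6},{4,2,7},{4,3,7},{2,3,7},
  {4,3,8},{4,1,8},{3,1,8},{5,1,9},{5,2,9},{1,2,9},{5,2,10},{5,3,10},{2,3,10},
  {5,3,11},{5,1,11},{3,1,11}]" unfolding B_expl by simp
    show ?thesis unfolding eq by (rule order_trans[OF card_length]) simp
  qed
  ultimately show ?thesis by linarith
qed

lemma tri_prop:
  assumes "{u,v,w} \<in> B_stellar" "u \<noteq> v"
  shows "1 \<le> u \<and> 1 \<le> v \<and> 1 \<le> w \<and> (u \<le> 5 \<or> v \<le> 5) \<and> ((\<not> u \<le> 5 \<or> \<not> v \<le> 5) \<longrightarrow> w \<le> 5) \<and> w \<noteq> u \<and> w \<noteq> v"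
proof -
  obtain a b c where h: "{u,v,w} = {a,b,c}" "1 \<le> a" "1 \<le> b" "a \<le> 5" "b \<le> 5" "6 \<le> c" "a \<noteq> b"
    using tri_shape[OF assms(1)] by blast
  have m: "u = a \<or> u = b \<or> u = c" "v = a \<or> v = b \<or> v = c" "w = a \<or> w = b \<or> w = c"
    "a = u \<or> a = v \<or> a = w" "b = u \<or> b = v \<or> b = w" "c = u \<or> c = v \<or> c = w"
    using h(1) by blast+
  have ca: "c \<noteq> a" "c \<noteq> b" using h by auto
  have g1: "1 \<le> u \<and> 1 \<le> v \<and> 1 \<le> w" using m(1-3) h by auto
  have g2: "u \<le> 5 \<or> v \<le> 5" using m(1,2) h assms(2) by auto
  have g3: "w \<noteq> u" using m(4-6) ca h(7) by metis
  have g4: "w \<noteq> v" using m(4-6) ca h(7) by metis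
  have g5: "(\<not> u \<le> 5 \<or> \<not> v \<le> 5) \<longrightarrow> w \<le> 5"
  proof
    assume "\<not> u \<le> 5 \<or> \<not> v \<le> 5"
    then have "u = c \<or> v = c" using m(1,2) h by auto
    then show "w \<le> 5" using m(3) h g3 g4 by auto
  qed
  show ?thesis using g1 g2 g3 g4 g5 by blast
qed

lemma card_old_mono:
  "card ((R \<union> {u,v}) \<inter> {1..5::nat}) \<ge> card (R \<inter> {1..5}) + card ({u,v} \<inter> {1..5})"
  if "u \<notin> R" "v \<notin> R"
proof -
  have "(R \<union> {u,v}) \<inter> {1..5} = (R \<inter> {1..5}) \<union> ({u,v} \<inter> {1..5})" by auto
  moreover have "card ((R \<inter> {1..5}) \<union> ({u,v} \<inter> {1..5})) = card (R \<inter> {1..5}) + card ({u,v} \<inter> {1..5})"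
    by (rule card_Un_disjoint) (use that in auto)
  ultimately show ?thesis by simp
qed

lemma inv:
  assumes "game_reach B_stellar R E G"
  shows "(\<forall>e\<in>E. e \<subseteq> R) \<and> finite E \<and> finite G \<and> card G \<le> card E \<and> (E = {} \<or> card E + 1 \<le> card (R \<inter> {1..5::nat}))"
  using assms
proof induction
  case (start S)
  then show ?case by simp
next
  case (move R E G u v w)
  have uv: "u \<noteq> v" using move.hyps(2) unfolding edges_def by (auto simp: card_insert_if split: if_splits)
  note tp = tri_prop[OF move.hyps(6) uv]
  have wR: "w \<noteq> u" "w \<noteq> v" using tp by auto
  have cm: "card ((R \<union> {u,v}) \<inter> {1..5}) \<ge> card (R \<inter> {1..5}) + card ({u,v} \<inter> {1..5})"
    using card_old_mono move.hyps(3,4) by blast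
  have c1: "card ({u,v} \<inter> {1..5::nat}) \<ge> 1"
  proof -
    from tp obtain x where "x \<in> {u,v} \<inter> {1..5}" by auto
    then show ?thesis by (metis One_nat_def Suc_leI card_gt_0_iff empty_iff finite.emptyI finite.insertI finite_Int)
  qed
  have c2: "(u \<le> 5 \<and> v \<le> 5) \<Longrightarrow> card ({u,v} \<inter> {1..5::nat}) = 2"
  proof -
    assume "u \<le> 5 \<and> v \<le> 5"
    then have "{u,v} \<inter> {1..5} = {u,v}" using tp by auto
    then show ?thesis using uv by simp
  qed
  have wold: "E = {} \<Longrightarrow> card ((R \<union> {u,v}) \<inter> {1..5}) \<ge> 2"
  proof (cases "u \<le> 5 \<and> v \<le> 5")
    case True then show ?thesis using c2 cm by linarith
  next
    case False
    then have "w \<le> 5" using tp by auto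
    then have "w \<in> R \<inter> {1..5}" using move.hyps(5) tp by auto
    then have "card (R \<inter> {1..5}) \<ge> 1"
      by (metis One_nat_def Suc_leI card_gt_0_iff empty_iff finite_Int finite_atLeastAtMost)
    then show ?thesis using c1 cm by linarith
  qed
  have fE: "finite E" "finite G" "card G \<le> card E" using move.IH by auto
  have ce: "card (insert {u,v} E) \<le> card E + 1" "card (insert {u,v,w} G) \<le> card G + 1"
    using fE by (auto simp: card_insert_if)
  have ge: "card (insert {u,v,w} G) \<le> card (insert {u,v} E)"
  proof (cases "{u,v} \<in> E")
    case False then show ?thesis using fE ce by (simp add: card_insert_if)
  next
    case True
    then have "u \<in> R" using move.IH by blast
    then show ?thesis using move.hyps(3) by simp
  qed
  show ?case
  proof (cases "E = {}")
    case True
    then show ?thesis using wold ce fE ge move.IH by auto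
  next
    case False
    then have "card E + 1 \<le> card (R \<inter> {1..5})" using move.IH by auto
    then show ?thesis using ce fE ge c1 cm move.IH by auto
  qed
qed

theorem mainTheorem13:
  shows "card B_stellar = 18
    \<and> (\<forall>R E G. game_reach B_stellar R E G \<longrightarrow> card E \<le> 4 \<and> card G \<le> 4)
    \<and> \<not> winning B_stellar"
proof -
  have c18: "card B_stellar = 18" by (rule card18)
  have b: "\<forall>R E G. game_reach B_stellar R E G \<longrightarrow> card E \<le> 4 \<and> card G \<le> 4"
  proof (intro allI impI)
    fix R E G assume "game_reach B_stellar R E G"
    note i = inv[OF this]
    have "card (R \<inter> {1..5::nat}) \<le> card {1..5::nat}" by (rule card_mono) auto
    then have "card (R \<inter> {1..5::nat}) \<le> 5" by simp
    then show "card E \<le> 4 \<and> card G \<le> 4" using i by auto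
  qed
  have "\<not> winning B_stellar" unfolding winning_def using b c18 by fastforce
  with c18 b show ?thesis by blast
qed

end
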